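(* Let $V_1$ and $V_2$ be disjoint finite nonempty vertex sets with $|V_1|=n_1$, $|V_2|=n_2$, and let $E\subseteq\{\{u,w\}: u\in V_1, w\in V_2\}$ be an arbitrary set of inter-links. Let $s_1,s_2$ be two additional vertices (super-nodes), $s_1$ belonging to the first QLAN and $s_2$ to the second. Consider the graph $G_{n_1+1,n_2+1}$ on vertex set $V_1\cup\{s_1\}\cup V_2\cup\{s_2\}$ with edge set $$E\;\cup\;\{\{s_1,s_2\}\}\;\cup\;\{\{v,s_2\}: v\in V_1\}\;\cup\;\{\{w,s_1\}: w\in V_2\},$$ i.e. every client node of one QLAN is connected to its original inter-link neighbours in the other QLAN and to the super-node of the other QLAN, and the two super-nodes are adjacent. Then the $(n_1+n_2+2)$-qubit graph state $|G_{n_1+1,n_2+1}\rangle$ can be transformed by LOCC (single-qubit Pauli measurements on the qubits of $s_1$ and $s_2$ followed by outcome-dependent local unitary corrections on the remaining qubits) into the $(n_1+n_2)$-qubit graph state $|\bar G_{n_1,n_2}\rangle$, where $\bar G_{n_1,n_2}$ is the complement Inter-QLAN: the graph on $V_1\cup V_2$ with edge set $\bar E=\{\{u,w\}: u\in V_1,\ w\in V_2,\ \{u,w\}\notin E\}$. *)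

theory Defs
  imports Complex_Main
begin

text \<open>A (unnormalised) pure state on a
finite qubit set W is a function from computational basis states to amplitudes;
a basis state is encoded by the set S \<subseteq> W of qubits in state |1>.
Amplitudes of sets not contained in W are 0.  Edges are 2-element vertex sets.\<close>

type_synonym 'v qstate = "'v set \<Rightarrow> complex"

definition graph_state :: "'v set \<Rightarrow> 'v set set \<Rightarrow> 'v qstate" where
  "graph_state W Ed = (\<lambda>S. if S \<subseteq> W then (-1) ^ card {e \<in> Ed. e \<subseteq> S} else 0)"

datatype pauli = PX | PY | PZ

text \<open>Eigenvector of a Pauli operator; outcome True means eigenvalue +1, False means -1.
  Argument b is the computational basis index (False = |0>, True = |1>).\<close>
fun pauli_eigvec :: "pauli \<Rightarrow> bool \<Rightarrow> bool \<Rightarrow> complex" where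
  "pauli_eigvec PZ r b = (if b = r then 0 else 1)"
| "pauli_eigvec PX r b = (if b then (if r then 1 else -1) else 1) / complex_of_real (sqrt 2)"
| "pauli_eigvec PY r b = (if b then (if r then \<i> else - \<i>) else 1) / complex_of_real (sqrt 2)"

text \<open>Projective measurement of the Pauli P on qubit s of a state on W with outcome r:
  the projected state is |e_{P,r}> \<otimes> |phi>; this returns the (unnormalised)
  post-measurement state phi of the remaining qubits W - {s}.\<close>
definition pauli_measure :: "'v set \<Rightarrow> 'v \<Rightarrow> pauli \<Rightarrow> bool \<Rightarrow> 'v qstate \<Rightarrow> 'v qstate" where
  "pauli_measure W s P r \<psi> = (\<lambda>T. if T \<subseteq> W - {s}
      then (\<Sum>c\<in>UNIV. cnj (pauli_eigvec P r c) * \<psi> (if c then insert s T else T))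
      else 0)"

text \<open>A single-qubit operator as a 2x2 matrix M out in.\<close>
definition unitary1 :: "(bool \<Rightarrow> bool \<Rightarrow> complex) \<Rightarrow> bool" where
  "unitary1 M \<longleftrightarrow> (\<forall>i j. (\<Sum>k\<in>UNIV. cnj (M k i) * M k j) = (if i = j then 1 else 0))"

definition local_op :: "'v set \<Rightarrow> ('v \<Rightarrow> bool \<Rightarrow> bool \<Rightarrow> complex) \<Rightarrow> 'v qstate \<Rightarrow> 'v qstate" where
  "local_op W U \<psi> = (\<lambda>T. if T \<subseteq> W
      then (\<Sum>S\<in>Pow W. (\<Prod>v\<in>W. U v (v \<in> T) (v \<in> S)) * \<psi> S)
      else 0)"

end

theory Submission
  imports Defs
begin

lemma finite_E:
  assumes "finite V1" "finite V2" "E \<subseteq> {{u, w} | u w. u \<in> V1 \<and> w \<in> V2}"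
  shows "finite E"
proof -
  have "E \<subseteq> (\<lambda>(u,w). {u,w}) ` (V1 \<times> V2)" using assms(3) by auto
  thus ?thesis using assms(1,2) by (meson finite_SigmaI finite_imageI finite_subset)
qed

lemma card_G:
  assumes fin: "finite V1" "finite V2" and dis: "V1 \<inter> V2 = {}"
    and s: "s1 \<notin> V1 \<union> V2" "s2 \<notin> V1 \<union> V2" "s1 \<noteq> s2"
    and EE: "E \<subseteq> {{u, w} | u w. u \<in> V1 \<and> w \<in> V2}"
    and G: "G = E \<union> {{s1, s2}} \<union> {{v, s2} | v. v \<in> V1} \<union> {{w, s1} | w. w \<in> V2}"
    and T: "T \<subseteq> V1 \<union> V2"
  shows "card {e \<in> G. e \<subseteq> T \<union> (if a then {s1} else {}) \<union> (if b then {s2} else {})}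
    = card {e\<in>E. e \<subseteq> T} + ((if a \<and> b then 1 else 0) + (if a then card (T\<inter>V2) else 0) + (if b then card (T\<inter>V1) else 0))"
proof -
  let ?S = "T \<union> (if a then {s1} else {}) \<union> (if b then {s2} else {})"
  define A2 where "A2 = (if a \<and> b then {{s1,s2}} else {})"
  define A3 where "A3 = (if b then (\<lambda>v. {v,s2}) ` (T\<inter>V1) else {})"
  define A4 where "A4 = (if a then (\<lambda>w. {w,s1}) ` (T\<inter>V2) else {})"
  have finE: "finite E" using finite_E fin EE by blast
  have eq: "{e \<in> G. e \<subseteq> ?S} = {e\<in>E. e \<subseteq> T} \<union> (A2 \<union> (A3 \<union> A4))"
  proof
    show "{e \<in> G. e \<subseteq> ?S} \<subseteq> {e\<in>E. e \<subseteq> T} \<union> (A2 \<union> (A3 \<union> A4))"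
    proof
      fix e assume e: "e \<in> {e \<in> G. e \<subseteq> ?S}"
      show "e \<in> {e\<in>E. e \<subseteq> T} \<union> (A2 \<union> (A3 \<union> A4))"
      proof (cases "e \<in> E")
        case True
        then obtain u w where "e = {u,w}" "u \<in> V1" "w \<in> V2" using EE by blast
        then show ?thesis using e s True by (auto split: if_splits)
      next
        case False
        have eS: "e \<subseteq> ?S" using e by (simp only: mem_Collect_eq)
        have "e = {s1,s2} \<or> (\<exists>v\<in>V1. e={v,s2}) \<or> (\<exists>w\<in>V2. e={w,s1})" using G False e by blast
        then show ?thesis
        proof (elim disjE bexE)
          assume "e = {s1,s2}" then show ?thesis using eS s T unfolding A2_def by (cases a; cases b) auto
        next
          fix v assume "v \<in> V1" "e = {v,s2}" then show ?thesis using eS s T unfolding A3_def by (cases a; cases b) auto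
        next
          fix w assume "w \<in> V2" "e = {w,s1}" then show ?thesis using eS s T unfolding A4_def by (cases a; cases b) auto
        qed
      qed
    qed
  next
    show "{e\<in>E. e \<subseteq> T} \<union> (A2 \<union> (A3 \<union> A4)) \<subseteq> {e \<in> G. e \<subseteq> ?S}"
      using G T unfolding A2_def A3_def A4_def by (auto split: if_splits)
  qed
  have d1: "{e\<in>E. e \<subseteq> T} \<inter> (A2 \<union> (A3 \<union> A4)) = {}"
    using s T unfolding A2_def A3_def A4_def by auto
  have d2: "A2 \<inter> (A3 \<union> A4) = {}"
    using s T unfolding A2_def A3_def A4_def by (auto simp: doubleton_eq_iff)
  have d3: "A3 \<inter> A4 = {}"
    using s T unfolding A2_def A3_def A4_def by (auto simp: doubleton_eq_iff)
  have c2: "card A2 = (if a \<and> b then 1 else 0)" unfolding A2_def by auto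
  have c3: "card A3 = (if b then card (T\<inter>V1) else 0)" unfolding A3_def
    using s by (auto intro!: card_image inj_onI simp: doubleton_eq_iff)
  have c4: "card A4 = (if a then card (T\<inter>V2) else 0)" unfolding A4_def
    using s by (auto intro!: card_image inj_onI simp: doubleton_eq_iff)
  have f: "finite A2" "finite A3" "finite A4" "finite {e\<in>E. e \<subseteq> T}"
    using fin finE unfolding A2_def A3_def A4_def by auto
  show ?thesis unfolding eq
    by (simp add: card_Un_disjoint f d1 d2 d3 c2 c3 c4)
qed

lemma card_Gbar:
  assumes fin: "finite V1" "finite V2" and dis: "V1 \<inter> V2 = {}"
    and EE: "E \<subseteq> {{u, w} | u w. u \<in> V1 \<and> w \<in> V2}"
    and Gb: "Gbar = {{u, w} | u w. u \<in> V1 \<and> w \<in> V2 \<and> {u, w} \<notin> E}"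
    and T: "T \<subseteq> V1 \<union> V2"
  shows "card {e \<in> Gbar. e \<subseteq> T} + card {e\<in>E. e \<subseteq> T} = card (T\<inter>V1) * card (T\<inter>V2)"
proof -
  have eq: "{e \<in> Gbar. e \<subseteq> T} \<union> {e\<in>E. e \<subseteq> T} = (\<lambda>(u,w). {u,w}) ` ((T\<inter>V1) \<times> (T\<inter>V2))"
  proof
    show "{e \<in> Gbar. e \<subseteq> T} \<union> {e\<in>E. e \<subseteq> T} \<subseteq> (\<lambda>(u,w). {u,w}) ` ((T\<inter>V1) \<times> (T\<inter>V2))"
    proof
      fix e assume e: "e \<in> {e \<in> Gbar. e \<subseteq> T} \<union> {e\<in>E. e \<subseteq> T}"
      then obtain u w where "e = {u,w}" "u \<in> V1" "w \<in> V2" using EE Gb by blast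
      then show "e \<in> (\<lambda>(u,w). {u,w}) ` ((T\<inter>V1) \<times> (T\<inter>V2))" using e by auto
    qed
  next
    show "(\<lambda>(u,w). {u,w}) ` ((T\<inter>V1) \<times> (T\<inter>V2)) \<subseteq> {e \<in> Gbar. e \<subseteq> T} \<union> {e\<in>E. e \<subseteq> T}"
      using Gb by auto
  qed
  have inj: "inj_on (\<lambda>(u,w). {u,w}) ((T\<inter>V1) \<times> (T\<inter>V2))"
    using dis by (auto intro!: inj_onI simp: doubleton_eq_iff)
  have finT: "finite T" using fin T finite_subset by blast
  have fu: "finite ({e \<in> Gbar. e \<subseteq> T} \<union> {e\<in>E. e \<subseteq> T})" unfolding eq using finT by simp
  hence f: "finite {e \<in> Gbar. e \<subseteq> T}" "finite {e\<in>E. e \<subseteq> T}" by simp_all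
  have "card ({e \<in> Gbar. e \<subseteq> T} \<union> {e\<in>E. e \<subseteq> T}) = card {e \<in> Gbar. e \<subseteq> T} + card {e\<in>E. e \<subseteq> T}"
    by (rule card_Un_disjoint[OF f]) (use Gb in auto)
  moreover have "card ((\<lambda>(u,w). {u,w}) ` ((T\<inter>V1) \<times> (T\<inter>V2))) = card (T\<inter>V1) * card (T\<inter>V2)"
    using card_image[OF inj] card_cartesian_product by metis
  ultimately show ?thesis using eq by simp
qed


lemma local_op_diag:
  assumes "finite A" "T \<subseteq> A" "\<And>v i j. v \<in> A \<Longrightarrow> i \<noteq> j \<Longrightarrow> U v i j = 0"
  shows "local_op A U \<psi> T = (\<Prod>v\<in>A. U v (v \<in> T) (v \<in> T)) * \<psi> T"
proof -
  have "(\<Sum>S\<in>Pow A. (\<Prod>v\<in>A. U v (v \<in> T) (v \<in> S)) * \<psi> S)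
      = (\<Sum>S\<in>Pow A. if S = T then (\<Prod>v\<in>A. U v (v \<in> T) (v \<in> S)) * \<psi> S else 0)"
  proof (rule sum.cong[OF refl])
    fix S assume S: "S \<in> Pow A"
    show "(\<Prod>v\<in>A. U v (v \<in> T) (v \<in> S)) * \<psi> S = (if S = T then (\<Prod>v\<in>A. U v (v \<in> T) (v \<in> S)) * \<psi> S else 0)"
    proof (cases "S = T")
      case False
      then obtain v where v: "v \<in> A" "(v \<in> T) \<noteq> (v \<in> S)" using S assms(2) by blast
      have "(\<Prod>v\<in>A. U v (v \<in> T) (v \<in> S)) = 0"
        by (rule prod_zero[OF assms(1)]) (use v assms(3) in blast)
      then show ?thesis using False by simp
    qed simp
  qed
  also have "\<dots> = (\<Prod>v\<in>A. U v (v \<in> T) (v \<in> T)) * \<psi> T"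
    using assms(1,2) by (subst sum.delta) auto
  finally show ?thesis unfolding local_op_def using assms(2) by simp
qed

lemma prod_flip:
  assumes "finite A"
  shows "(\<Prod>v\<in>A. (if v \<in> T \<and> P then -1 else 1 :: complex)) = (if P then (-1) ^ card (A \<inter> T) else 1)"
proof (cases P)
  case True
  have "(\<Prod>v\<in>A. (if v \<in> T \<and> P then -1 else 1 :: complex)) = (\<Prod>v\<in>A. (if v \<in> T then -1 else 1 :: complex))"
    using True by simp
  also have "\<dots> = (\<Prod>v\<in>A \<inter> T. -1) * (\<Prod>v\<in>A \<inter> - T. 1)"
    using prod.If_cases[OF assms, of "\<lambda>v. v \<in> T" "\<lambda>_. -1 :: complex" "\<lambda>_. 1"]
    by (simp add: Collect_mem_eq)
  finally show ?thesis using True by simp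
qed simp


lemma alg:
  fixes r k p q a b :: complex
  assumes r1: "r*r = 2" and r0: "r \<noteq> 0"
  shows "1/r*(1/r*k + (a/r*(k*q) + 0)) + (b/r*(1/r*(k*p) + (a/r* -(k*p*q) + 0)) + 0) = k/2*(1 + a*q + b*p - a*b*p*q)"
proof -
  have "1/r*(1/r*k + (a/r*(k*q) + 0)) + (b/r*(1/r*(k*p) + (a/r* -(k*p*q) + 0)) + 0)
     = (k + a*k*q + b*k*p - a*b*k*p*q) / (r*r)" using r0 by (simp add: field_simps)
  also have "\<dots> = k/2*(1 + a*q + b*p - a*b*p*q)" unfolding r1 by (simp add: field_simps)
  finally show ?thesis .
qed

lemma gs_vals:
  assumes fin: "finite V1" "finite V2" and dis: "V1 \<inter> V2 = {}"
    and s: "s1 \<notin> V1 \<union> V2" "s2 \<notin> V1 \<union> V2" "s1 \<noteq> s2"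
    and EE: "E \<subseteq> {{u, w} | u w. u \<in> V1 \<and> w \<in> V2}"
    and G: "G = E \<union> {{s1, s2}} \<union> {{v, s2} | v. v \<in> V1} \<union> {{w, s1} | w. w \<in> V2}"
    and W: "W = V1 \<union> {s1} \<union> V2 \<union> {s2}"
    and T: "T \<subseteq> V1 \<union> V2"
  defines "k \<equiv> (-1::complex) ^ card {e\<in>E. e \<subseteq> T}"
    and "p \<equiv> (-1::complex) ^ card (T \<inter> V1)" and "q \<equiv> (-1::complex) ^ card (T \<inter> V2)"
  shows "graph_state W G T = k"
    "graph_state W G (insert s1 T) = k * q"
    "graph_state W G (insert s2 T) = k * p"
    "graph_state W G (insert s1 (insert s2 T)) = - (k * p * q)"
proof -
  note cG = card_G[OF fin dis s EE G T]
  show "graph_state W G T = k"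
    using cG[of False False] T W unfolding graph_state_def k_def by auto
  show "graph_state W G (insert s1 T) = k * q"
    using cG[of True False] T W unfolding graph_state_def k_def q_def by (auto simp: power_add)
  show "graph_state W G (insert s2 T) = k * p"
    using cG[of False True] T W unfolding graph_state_def k_def p_def by (auto simp: power_add)
  have "T \<union> {s1} \<union> {s2} = insert s1 (insert s2 T)" by auto
  then show "graph_state W G (insert s1 (insert s2 T)) = - (k * p * q)"
    using cG[of True True] T W unfolding graph_state_def k_def p_def q_def by (auto simp: power_add)
qed

theorem lemma1:
  fixes V1 V2 :: "'v set" and E :: "'v set set" and s1 s2 :: 'v
  assumes "finite V1" "finite V2" "V1 \<noteq> {}" "V2 \<noteq> {}" "V1 \<inter> V2 = {}"
    and "s1 \<notin> V1 \<union> V2" "s2 \<notin> V1 \<union> V2" "s1 \<noteq> s2"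
    and "E \<subseteq> {{u, w} | u w. u \<in> V1 \<and> w \<in> V2}"
  shows "\<exists>P1 P2. \<forall>o1 o2.
    (let W = V1 \<union> {s1} \<union> V2 \<union> {s2};
         G = E \<union> {{s1, s2}} \<union> {{v, s2} | v. v \<in> V1} \<union> {{w, s1} | w. w \<in> V2};
         Gbar = {{u, w} | u w. u \<in> V1 \<and> w \<in> V2 \<and> {u, w} \<notin> E};
         \<phi> = pauli_measure (W - {s1}) s2 P2 o2
               (pauli_measure W s1 P1 o1 (graph_state W G))
     in \<phi> \<noteq> (\<lambda>_. 0) \<longrightarrow>
        (\<exists>U c. (\<forall>v \<in> V1 \<union> V2. unitary1 (U v)) \<and> c \<noteq> 0 \<and>
           local_op (V1 \<union> V2) U \<phi> = (\<lambda>T. c * graph_state (V1 \<union> V2) Gbar T)))"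
proof (intro exI[of _ PX] allI)
  fix o1 o2
  define W where "W = V1 \<union> {s1} \<union> V2 \<union> {s2}"
  define G where "G = E \<union> {{s1, s2}} \<union> {{v, s2} | v. v \<in> V1} \<union> {{w, s1} | w. w \<in> V2}"
  define Gbar where "Gbar = {{u, w} | u w. u \<in> V1 \<and> w \<in> V2 \<and> {u, w} \<notin> E}"
  define phi where "phi = pauli_measure (W - {s1}) s2 PX o2 (pauli_measure W s1 PX o1 (graph_state W G))"
  define fl where "fl v = ((v \<in> V1 \<and> \<not> o1) \<or> (v \<in> V2 \<and> \<not> o2))" for v
  define U where "U v i j = (if i = j then (if i \<and> fl v then -1 else 1) else (0::complex))" for v i j
  define c where "c = (if \<not> o1 \<and> \<not> o2 then -1 else (1::complex))"
  have fin: "finite (V1 \<union> V2)" using assms by simp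
  have unit: "\<forall>v \<in> V1 \<union> V2. unitary1 (U v)"
    unfolding unitary1_def U_def by (auto simp: UNIV_bool)
  have eq: "local_op (V1 \<union> V2) U phi = (\<lambda>T. c * graph_state (V1 \<union> V2) Gbar T)"
  proof
    fix T
    show "local_op (V1 \<union> V2) U phi T = c * graph_state (V1 \<union> V2) Gbar T"
    proof (cases "T \<subseteq> V1 \<union> V2")
      case False
      then show ?thesis unfolding local_op_def graph_state_def by simp
    next
      case True
      define k where "k \<equiv> (-1::complex) ^ card {e\<in>E. e \<subseteq> T}"
      define p where "p \<equiv> (-1::complex) ^ card (T \<inter> V1)"
      define q where "q \<equiv> (-1::complex) ^ card (T \<inter> V2)"
      note gv = gs_vals[OF assms(1,2,5,6,7,8,9) G_def W_def True]
      have prodU: "(\<Prod>v\<in>V1 \<union> V2. U v (v \<in> T) (v \<in> T)) = (if \<not> o1 then p else 1) * (if \<not> o2 then q else 1)"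
      proof -
        have "(\<Prod>v\<in>V1 \<union> V2. U v (v \<in> T) (v \<in> T)) = (\<Prod>v\<in>V1. U v (v \<in> T) (v \<in> T)) * (\<Prod>v\<in>V2. U v (v \<in> T) (v \<in> T))"
          using assms(1,2,5) by (rule prod.union_disjoint)
        also have "(\<Prod>v\<in>V1. U v (v \<in> T) (v \<in> T)) = (\<Prod>v\<in>V1. (if v \<in> T \<and> \<not> o1 then -1 else 1 :: complex))"
          by (rule prod.cong[OF refl]) (use assms(5) in \<open>auto simp: U_def fl_def\<close>)
        also have "(\<Prod>v\<in>V2. U v (v \<in> T) (v \<in> T)) = (\<Prod>v\<in>V2. (if v \<in> T \<and> \<not> o2 then -1 else 1 :: complex))"
          by (rule prod.cong[OF refl]) (use assms(5) in \<open>auto simp: U_def fl_def\<close>)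
        finally show ?thesis using prod_flip[OF assms(1), of T "\<not> o1"] prod_flip[OF assms(2), of T "\<not> o2"]
          unfolding p_def q_def by (simp add: Int_commute)
      qed
      have sub: "T \<subseteq> W - {s1} - {s2}" "insert s2 T \<subseteq> W - {s1}" "T \<subseteq> W - {s1}"
        using True assms(6,7,8) unfolding W_def by auto
      define r where "r = complex_of_real (sqrt 2)"
      have r1: "r * r = 2"
      proof -
        have "r * r = complex_of_real (sqrt 2 * sqrt 2)" unfolding r_def by (simp only: of_real_mult)
        also have "\<dots> = 2" by simp
        finally show ?thesis .
      qed
      have r0: "r \<noteq> 0" using r1 by auto
      have ev: "\<And>oo b. cnj (pauli_eigvec PX oo b) = (if b then (if oo then 1 else -1) else 1) / r"
        by (simp add: r_def)
      have gv': "graph_state W G T = k" "graph_state W G (insert s1 T) = k * q"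
        "graph_state W G (insert s2 T) = k * p" "graph_state W G (insert s1 (insert s2 T)) = - (k * p * q)"
        using gv unfolding k_def p_def q_def by simp_all
      have phiT: "phi T = (k / 2) * (1 + (if o1 then 1 else -1) * q + (if o2 then 1 else -1) * p
                   - (if o1 then 1 else -1) * (if o2 then 1 else -1) * p * q)"
        unfolding phi_def pauli_measure_def using sub
        apply (simp only: UNIV_bool ev gv' if_True if_False sum.insert finite.intros insert_iff empty_iff simp_thms sum.empty)
        apply (rule alg[OF r1 r0])
        done
      have gb: "graph_state (V1 \<union> V2) Gbar T = (-1) ^ (card (T \<inter> V1) * card (T \<inter> V2)) * k"
      proof -
        have cg: "card {e \<in> Gbar. e \<subseteq> T} + card {e\<in>E. e \<subseteq> T} = card (T\<inter>V1) * card (T\<inter>V2)"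
          using card_Gbar[OF assms(1,2,5,9) Gbar_def True] .
        have "(-1::complex) ^ card {e \<in> Gbar. e \<subseteq> T} * k * k = (-1) ^ (card (T \<inter> V1) * card (T \<inter> V2)) * k"
          unfolding k_def by (simp add: cg[symmetric] power_add)
        moreover have "k * k = 1" unfolding k_def by (simp flip: power_add)
        ultimately show ?thesis using True unfolding graph_state_def by (simp add: mult.assoc)
      qed
      have ld: "local_op (V1 \<union> V2) U phi T = (\<Prod>v\<in>V1 \<union> V2. U v (v \<in> T) (v \<in> T)) * phi T"
        by (rule local_op_diag[OF fin True]) (simp add: U_def)
      show ?thesis
        unfolding ld prodU phiT gb c_def p_def q_def
        by (cases "even (card (T \<inter> V1))"; cases "even (card (T \<inter> V2))"; cases o1; cases o2)
           (simp_all add: neg_one_even_power neg_one_odd_power)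
    qed
  qed
  have main: "\<exists>U c. (\<forall>v \<in> V1 \<union> V2. unitary1 (U v)) \<and> c \<noteq> 0 \<and>
           local_op (V1 \<union> V2) U phi = (\<lambda>T. c * graph_state (V1 \<union> V2) Gbar T)"
    using unit eq by (intro exI[of _ U] exI[of _ c]) (simp add: c_def)
  then show "let W = V1 \<union> {s1} \<union> V2 \<union> {s2};
         G = E \<union> {{s1, s2}} \<union> {{v, s2} | v. v \<in> V1} \<union> {{w, s1} | w. w \<in> V2};
         Gbar = {{u, w} | u w. u \<in> V1 \<and> w \<in> V2 \<and> {u, w} \<notin> E};
         \<phi> = pauli_measure (W - {s1}) s2 PX o2
               (pauli_measure W s1 PX o1 (graph_state W G))
     in \<phi> \<noteq> (\<lambda>_. 0) \<longrightarrow>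
        (\<exists>U c. (\<forall>v \<in> V1 \<union> V2. unitary1 (U v)) \<and> c \<noteq> 0 \<and>
           local_op (V1 \<union> V2) U \<phi> = (\<lambda>T. c * graph_state (V1 \<union> V2) Gbar T))"
    unfolding Let_def W_def[symmetric] G_def[symmetric] Gbar_def[symmetric] phi_def[symmetric] by blast
qed

end
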